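(* Let $\alpha\in\mathbb{Q}(i)\setminus\mathbb{R}$ with $|\alpha|>1$, with minimal primitive polynomial $P_\alpha(X)=a_2X^2+a_1X+a_0$ ($a_0,a_1,a_2\in\mathbb{Z}$ coprime, $a_2>0$, $P_\alpha(\alpha)=0$), $\mathcal{D}=\{0,\ldots,|a_0|-1\}$ and $\Lambda_\alpha=\mathbb{Z}[\alpha]\cap\alpha^{-1}\mathbb{Z}[\alpha^{-1}]$. If $N\in\Lambda_\alpha\setminus\{0\}$ has an integer $\alpha$-expansion $N=\sum_{j=0}^k d_j\alpha^j$ ($d_j\in\mathcal{D}$, $d_k\ne0$), then $$k=\log_{|\alpha|}(|N|)+\mathcal{O}(1),$$ where the implied constant depends only on $\alpha$.
   Context: For $x\in\Lambda_\alpha$ there is a unique $d\in\mathcal{D}$ with $(x-d)/\alpha\in\Lambda_\alpha$, and $T_\alpha(x)=(x-d)/\alpha$. For $N=N_0\in\Lambda_\alpha$ let $N_{j+1}=T_\alpha(N_j)$ and $d_j$ be defined by $N_j=\alpha N_{j+1}+d_j$; if $k$ is minimal with $N_{k+1}=0$, then $N=\sum_{j=0}^k d_j\alpha^j$ is the integer $\alpha$-expansion of $N$. *)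

theory Defs
  imports Complex_Main
begin

definition Zpoly :: "complex \<Rightarrow> complex set" where
  "Zpoly \<alpha> = {z. \<exists>(n::nat) (c::nat \<Rightarrow> int). z = (\<Sum>j<n. of_int (c j) * \<alpha> ^ j)}"

definition invZpoly :: "complex \<Rightarrow> complex set" where
  "invZpoly \<alpha> = {z. \<exists>(n::nat) (c::nat \<Rightarrow> int). z = (\<Sum>j=1..n. of_int (c j) * (inverse \<alpha>) ^ j)}"

definition Lambda :: "complex \<Rightarrow> complex set" where
  "Lambda \<alpha> = Zpoly \<alpha> \<inter> invZpoly \<alpha>"

definition digits :: "int \<Rightarrow> int set" where
  "digits a0 = {0..\<bar>a0\<bar> - 1}"

definition Tdigit :: "int \<Rightarrow> complex \<Rightarrow> complex \<Rightarrow> int" where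
  "Tdigit a0 \<alpha> x = (THE d. d \<in> digits a0 \<and> (x - of_int d) / \<alpha> \<in> Lambda \<alpha>)"

definition Tmap :: "int \<Rightarrow> complex \<Rightarrow> complex \<Rightarrow> complex" where
  "Tmap a0 \<alpha> x = (x - of_int (Tdigit a0 \<alpha> x)) / \<alpha>"

definition orbit :: "int \<Rightarrow> complex \<Rightarrow> complex \<Rightarrow> nat \<Rightarrow> complex" where
  "orbit a0 \<alpha> N j = (Tmap a0 \<alpha> ^^ j) N"

definition expdigit :: "int \<Rightarrow> complex \<Rightarrow> complex \<Rightarrow> nat \<Rightarrow> complex" where
  "expdigit a0 \<alpha> N j = orbit a0 \<alpha> N j - \<alpha> * orbit a0 \<alpha> N (Suc j)"

end

theory Submission
  imports Defs "HOL-Computational_Algebra.Primes"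
begin


definition inL :: "complex \<Rightarrow> complex \<Rightarrow> bool" where
  "inL y w \<longleftrightarrow> (\<exists>r s::int. w = of_int r + of_int s * y)"

lemma inL_int: "inL y (of_int r)"
  unfolding inL_def by (rule exI[of _ r], rule exI[of _ 0]) simp

lemma inL_y: "inL y y"
  unfolding inL_def by (rule exI[of _ 0], rule exI[of _ 1]) simp

lemma inL_add: "inL y a \<Longrightarrow> inL y b \<Longrightarrow> inL y (a + b)"
  unfolding inL_def
proof (elim exE)
  fix r1 s1 r2 s2 assume "a = of_int r1 + of_int s1 * y" "b = of_int r2 + of_int s2 * y"
  then show "\<exists>r s. a + b = of_int r + of_int s * y"
    by (intro exI[of _ "r1+r2"] exI[of _ "s1+s2"]) (simp add: algebra_simps)
qed

lemma inL_mult: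
  assumes yy: "y * y = of_int p * y + of_int q" and "inL y a" "inL y b"
  shows "inL y (a * b)"
proof -
  obtain r1 s1 r2 s2 where a: "a = of_int r1 + of_int s1 * y" and b: "b = of_int r2 + of_int s2 * y"
    using assms(2,3) unfolding inL_def by blast
  have "a * b = of_int r1 * of_int r2 + (of_int r1 * of_int s2 + of_int r2 * of_int s1) * y + of_int s1 * of_int s2 * (y * y)"
    unfolding a b by (simp add: algebra_simps)
  also have "\<dots> = of_int (r1*r2 + s1*s2*q) + of_int (r1*s2 + r2*s1 + s1*s2*p) * y"
    unfolding yy by (simp add: algebra_simps)
  finally show ?thesis unfolding inL_def by blast
qed

lemma inL_pow:
  assumes yy: "y * y = of_int p * y + of_int q" and "inL y a"
  shows "inL y (a ^ n)"
proof (induction n)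
  case 0 then show ?case using inL_int[of y 1] by simp
next
  case (Suc n) then show ?case using inL_mult[OF yy assms(2)] by simp
qed

lemma inL_sum:
  assumes "\<And>i. i \<in> A \<Longrightarrow> inL y (f i)"
  shows "inL y (sum f A)"
  using assms
proof (induction A rule: infinite_finite_induct)
  case (infinite A) then show ?case using inL_int[of y 0] by simp
next
  case empty then show ?case using inL_int[of y 0] by simp
next
  case (insert x F) then show ?case by (simp add: inL_add)
qed

definition PS :: "complex \<Rightarrow> complex set" where
  "PS g = {z. \<exists>(n::nat) (c::nat \<Rightarrow> int). z = (\<Sum>j<n. of_int (c j) * g ^ j)}"

lemma PS_intro: "z = (\<Sum>j<n. of_int (c j) * g ^ j) \<Longrightarrow> z \<in> PS g"
  unfolding PS_def by blast

lemma PS_zero: "0 \<in> PS g"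
  unfolding PS_def by (rule CollectI, rule exI[of _ 0]) simp

lemma PS_step1:
  assumes "x \<in> PS g" shows "g * x + of_int d \<in> PS g"
proof -
  obtain n c where x: "x = (\<Sum>j<n. of_int (c j) * g ^ j)" using assms unfolding PS_def by blast
  define c' where "c' = (\<lambda>i. case i of 0 \<Rightarrow> d | Suc i \<Rightarrow> c i)"
  have "(\<Sum>j<Suc n. of_int (c' j) * g ^ j) = g * x + of_int d"
    unfolding sum.lessThan_Suc_shift x c'_def by (simp add: sum_distrib_left algebra_simps)
  then show ?thesis by (rule PS_intro[OF sym])
qed

lemma PS_addint:
  assumes "x \<in> PS g" shows "x + of_int d \<in> PS g"
proof -
  obtain n c where x: "x = (\<Sum>j<n. of_int (c j) * g ^ j)" using assms unfolding PS_def by blast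
  define c' where "c' = (\<lambda>i. (if i < n then c i else 0) + (if i = 0 then d else 0))"
  have "(\<Sum>j<Suc n. of_int (c' j) * g ^ j) = (\<Sum>j<Suc n. of_int (if j < n then c j else 0) * g ^ j) + (\<Sum>j<Suc n. of_int (if j = 0 then d else 0) * g ^ j)"
    unfolding sum.distrib[symmetric] by (rule sum.cong) (simp_all only: c'_def of_int_add distrib_right)
  also have "\<dots> = x + of_int d"
  proof -
    have e1: "(\<Sum>j<Suc n. of_int (if j < n then c j else 0) * g ^ j) = x"
      unfolding x by (simp add: sum.lessThan_Suc)
    have e2: "(\<Sum>j<Suc n. of_int (if j = 0 then d else 0) * g ^ j) = (of_int d :: complex)"
      unfolding sum.lessThan_Suc_shift by simp
    show ?thesis using e1 e2 by simp
  qed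
  finally show ?thesis by (rule PS_intro[OF sym])
qed

lemma PS_step2:
  assumes "x \<in> PS g" shows "g * (x - of_int d) \<in> PS g"
proof -
  have "g * (x - of_int d) = g * (x + of_int (-d)) + of_int 0" by simp
  then show ?thesis using PS_step1[OF PS_addint[OF assms, of "-d"], of 0] by (simp only:)
qed

lemma invZpoly_PS: "invZpoly a \<subseteq> PS (inverse a)"
proof
  fix z assume "z \<in> invZpoly a"
  then obtain n c where z: "z = (\<Sum>j=1..n. of_int (c j) * (inverse a) ^ j)" unfolding invZpoly_def by blast
  have "(\<Sum>j<Suc n. of_int (if j = 0 then 0 else c j) * (inverse a) ^ j) = z"
    unfolding z sum.lessThan_Suc_shift using sum.atLeast1_atMost_eq[of "\<lambda>j. of_int (c j) * (inverse a) ^ j" n] by simp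
  then show "z \<in> PS (inverse a)" by (rule PS_intro[OF sym])
qed



lemma coprime3_pow:
  fixes a0 a1 a2 :: int
  assumes g: "gcd a0 (gcd a1 a2) = 1" and "a2 \<noteq> 0"
  shows "gcd (a2^n) (gcd (a0^m) (a1^M)) = 1"
proof (rule ccontr)
  let ?g = "gcd (a2^n) (gcd (a0^m) (a1^M))"
  assume ne: "?g \<noteq> 1"
  have "\<bar>?g\<bar> \<noteq> 1" using ne by (simp only: abs_gcd_int not_False_eq_True)
  then obtain p where p: "prime p" "p dvd ?g" by (rule prime_factor_int)
  have "p dvd a2^n" using dvd_trans[OF p(2) gcd_dvd1] .
  moreover have "p dvd a0^m" using dvd_trans[OF dvd_trans[OF p(2) gcd_dvd2] gcd_dvd1] .
  moreover have "p dvd a1^M" using dvd_trans[OF dvd_trans[OF p(2) gcd_dvd2] gcd_dvd2] .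
  ultimately have "p dvd a2" "p dvd a0" "p dvd a1" using p(1) prime_dvd_power by auto
  then have "p dvd gcd a0 (gcd a1 a2)" by (simp only: gcd_greatest_iff)
  then have "is_unit p" using g by (simp only: ) 
  then show False using p(1) not_prime_unit by blast
qed

lemma integral:
  fixes \<alpha> :: complex and a0 a1 a2 :: int
  assumes rel: "of_int a2 * \<alpha>^2 + of_int a1 * \<alpha> + of_int a0 = 0" and a: "\<alpha> \<noteq> 0"
   and g: "gcd a0 (gcd a1 a2) = 1" and a2: "a2 \<noteq> 0"
   and x1: "x = (\<Sum>i<n. of_int (c i) * \<alpha>^i)"
   and x2: "x = (\<Sum>i<m. of_int (e i) * (inverse \<alpha>)^i)"
  shows "inL (of_int a2 * \<alpha>) x"
proof -
  define y where "y = of_int a2 * \<alpha>"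
  define z where "z = - of_int a1 - y"
  define \<beta> where "\<beta> = inverse \<alpha>"
  have yy: "y * y = of_int (-a1) * y + of_int (-a0*a2)"
  proof -
    have "y * y - (of_int (-a1) * y + of_int (-a0*a2)) = of_int a2 * (of_int a2 * \<alpha>^2 + of_int a1 * \<alpha> + of_int a0)"
      unfolding y_def by (simp add: algebra_simps power2_eq_square)
    then show ?thesis using rel by simp
  qed
  have az: "\<alpha> * z = of_int a0"
  proof -
    have "\<alpha> * z - of_int a0 = - (of_int a2 * \<alpha>^2 + of_int a1 * \<alpha> + of_int a0)"
      unfolding z_def y_def by (simp add: algebra_simps power2_eq_square)
    then show ?thesis using rel by simp
  qed
  have hby: "\<beta> * y = of_int a2" unfolding \<beta>_def y_def using a by simp
  have bz: "of_int a0 * \<beta> = z" unfolding \<beta>_def using az a by (simp add: field_simps)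
  have Ly: "inL y y" by (rule inL_y)
  have Lz: "inL y z" unfolding z_def using inL_add[OF inL_int[of y "-a1"] inL_mult[OF yy inL_int[of y "-1"] Ly]] by simp
  have Lpy: "inL y (y^k)" for k using inL_pow[OF yy Ly] .
  have Lpz: "inL y (z^k)" for k using inL_pow[OF yy Lz] .
  have Lm: "inL y a \<Longrightarrow> inL y b \<Longrightarrow> inL y (a*b)" for a b using inL_mult[OF yy] .
  have h1: "inL y (x * z^n)"
  proof -
    have "x * z^n = (\<Sum>i<n. of_int (c i) * (\<alpha>^i * z^n))" unfolding x1 by (simp add: sum_distrib_right mult.assoc)
    also have "\<dots> = (\<Sum>i<n. of_int (c i * a0^i) * z^(n-i))"
    proof (rule sum.cong[OF refl])
      fix i assume "i \<in> {..<n}"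
      then have "z^n = z^i * z^(n-i)" by (simp add: power_add[symmetric])
      then have "\<alpha>^i * z^n = (\<alpha>*z)^i * z^(n-i)" by (simp add: power_mult_distrib)
      then show "of_int (c i) * (\<alpha>^i * z^n) = of_int (c i * a0^i) * z^(n-i)" by (simp add: az)
    qed
    finally have eq: "x * z^n = (\<Sum>i<n. of_int (c i * a0^i) * z^(n-i))" .
    show ?thesis unfolding eq by (intro inL_sum Lm inL_int Lpz)
  qed
  have h2: "inL y (x * y^m)"
  proof -
    have "x * y^m = (\<Sum>i<m. of_int (e i) * (\<beta>^i * y^m))" unfolding x2 \<beta>_def by (simp add: sum_distrib_right mult.assoc)
    also have "\<dots> = (\<Sum>i<m. of_int (e i * a2^i) * y^(m-i))"
    proof (rule sum.cong[OF refl])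
      fix i assume "i \<in> {..<m}"
      then have "y^m = y^i * y^(m-i)" by (simp add: power_add[symmetric])
      then have "\<beta>^i * y^m = (\<beta>*y)^i * y^(m-i)" by (simp add: power_mult_distrib)
      then show "of_int (e i) * (\<beta>^i * y^m) = of_int (e i * a2^i) * y^(m-i)" by (simp add: hby)
    qed
    finally have eq: "x * y^m = (\<Sum>i<m. of_int (e i * a2^i) * y^(m-i))" .
    show ?thesis unfolding eq by (intro inL_sum Lm inL_int Lpy)
  qed
  have h3: "inL y (x * of_int (a2^n))"
  proof -
    have "x * of_int (a2^n) = (\<Sum>i<n. of_int (c i) * (\<alpha>^i * of_int a2 ^ n))" unfolding x1 by (simp add: sum_distrib_right mult.assoc)
    also have "\<dots> = (\<Sum>i<n. of_int (c i * a2^(n-i)) * y^i)"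
    proof (rule sum.cong[OF refl])
      fix i assume "i \<in> {..<n}"
      then have "(of_int a2 ^ n :: complex) = of_int a2^i * of_int a2^(n-i)" by (simp add: power_add[symmetric])
      then have "\<alpha>^i * of_int a2 ^ n = (of_int a2 * \<alpha>)^i * of_int a2^(n-i)" by (simp add: power_mult_distrib)
      then show "of_int (c i) * (\<alpha>^i * of_int a2 ^ n) = of_int (c i * a2^(n-i)) * y^i" by (simp add: y_def)
    qed
    finally have eq: "x * of_int (a2^n) = (\<Sum>i<n. of_int (c i * a2^(n-i)) * y^i)" .
    show ?thesis unfolding eq by (intro inL_sum Lm inL_int Lpy)
  qed
  have h4: "inL y (x * of_int (a0^m))"
  proof -
    have "x * of_int (a0^m) = (\<Sum>i<m. of_int (e i) * (\<beta>^i * of_int a0 ^ m))" unfolding x2 \<beta>_def by (simp add: sum_distrib_right mult.assoc)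
    also have "\<dots> = (\<Sum>i<m. of_int (e i * a0^(m-i)) * z^i)"
    proof (rule sum.cong[OF refl])
      fix i assume "i \<in> {..<m}"
      then have "(of_int a0 ^ m :: complex) = of_int a0^i * of_int a0^(m-i)" by (simp add: power_add[symmetric])
      then have "\<beta>^i * of_int a0 ^ m = (of_int a0 * \<beta>)^i * of_int a0^(m-i)" by (simp add: power_mult_distrib)
      then show "of_int (e i) * (\<beta>^i * of_int a0 ^ m) = of_int (e i * a0^(m-i)) * z^i" by (simp add: bz)
    qed
    finally have eq: "x * of_int (a0^m) = (\<Sum>i<m. of_int (e i * a0^(m-i)) * z^i)" .
    show ?thesis unfolding eq by (intro inL_sum Lm inL_int Lpz)
  qed
  define M where "M = n + m"
  have h5: "inL y (x * of_int ((-a1)^M))"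
  proof -
    have "(of_int ((-a1)^M) :: complex) = (y + z)^M" unfolding z_def by simp
    also have "\<dots> = (\<Sum>k\<le>M. of_nat (M choose k) * y^k * z^(M-k))" by (rule binomial_ring)
    finally have eq: "x * of_int ((-a1)^M) = (\<Sum>k\<le>M. of_nat (M choose k) * (x * y^k * z^(M-k)))"
      by (simp add: sum_distrib_left mult_ac)
    moreover have "inL y (of_nat (M choose k) * (x * y^k * z^(M-k)))" for k
    proof -
      have "inL y (x * y^k * z^(M-k))"
      proof (cases "m \<le> k")
        case True
        then have "x * y^k * z^(M-k) = (x * y^m) * y^(k-m) * z^(M-k)" by (simp add: power_add[symmetric] mult_ac)
        then show ?thesis by (simp only:) (intro Lm h2 Lpy Lpz)
      next
        case False
        then have "x * y^k * z^(M-k) = (x * z^n) * y^k * z^(M-k-n)" unfolding M_def by (simp add: power_add[symmetric] mult_ac)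
        then show ?thesis by (simp only:) (intro Lm h1 Lpy Lpz)
      qed
      then show ?thesis using Lm inL_int[of y "int (M choose k)"] by simp
    qed
    ultimately show ?thesis unfolding eq by (intro inL_sum)
  qed
  have "gcd (a2^n) (gcd (a0^m) ((-a1)^M)) = 1"
    using coprime3_pow[of a0 "-a1" a2 n m M] g a2 by simp
  moreover obtain u v where "u * a2^n + v * gcd (a0^m) ((-a1)^M) = gcd (a2^n) (gcd (a0^m) ((-a1)^M))" using bezout_int by blast
  ultimately have uv: "u * a2^n + v * gcd (a0^m) ((-a1)^M) = 1" by simp
  obtain u' v' where uv': "u' * a0^m + v' * (-a1)^M = gcd (a0^m) ((-a1)^M)" using bezout_int by blast
  have xeq: "x = of_int u * (x * of_int (a2^n)) + of_int (v*u') * (x * of_int (a0^m)) + of_int (v*v') * (x * of_int ((-a1)^M))"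
  proof -
    have "(of_int (u * a2^n + v * (u' * a0^m + v' * (-a1)^M)) :: complex) = 1" using uv uv' by simp
    then have "x = x * of_int (u * a2^n + v * (u' * a0^m + v' * (-a1)^M))" by simp
    then show ?thesis by (simp add: algebra_simps)
  qed
  have "inL y x" by (subst xeq) (intro inL_add Lm inL_int h3 h4 h5)
  then show ?thesis unfolding y_def .
qed



lemma inL_finite:
  assumes "Im y \<noteq> 0"
  shows "finite {w. inL y w \<and> cmod w \<le> R}"
proof -
  define A :: int where "A = ceiling (R / \<bar>Im y\<bar>)"
  define B :: int where "B = ceiling (R + real_of_int A * \<bar>Re y\<bar>)"
  have "{w. inL y w \<and> cmod w \<le> R} \<subseteq> (\<lambda>(r,s). of_int r + of_int s * y) ` ({-B..B} \<times> {-A..A})"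
  proof
    fix w assume "w \<in> {w. inL y w \<and> cmod w \<le> R}"
    then obtain r s where w: "w = of_int r + of_int s * y" and wR: "cmod w \<le> R" unfolding inL_def by blast
    have "\<bar>Im w\<bar> \<le> R" using abs_Im_le_cmod[of w] wR by linarith
    moreover have "Im w = of_int s * Im y" using w by simp
    ultimately have "\<bar>real_of_int s\<bar> * \<bar>Im y\<bar> \<le> R" by (simp add: abs_mult)
    then have "\<bar>real_of_int s\<bar> \<le> R / \<bar>Im y\<bar>" using assms by (simp add: pos_le_divide_eq)
    then have sA: "\<bar>s\<bar> \<le> A" unfolding A_def by linarith
    have "\<bar>Re w\<bar> \<le> R" using abs_Re_le_cmod[of w] wR by linarith
    moreover have "Re w = of_int r + of_int s * Re y" using w by simp
    ultimately have rw: "\<bar>real_of_int r + real_of_int s * Re y\<bar> \<le> R" by simp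
    have "\<bar>real_of_int r\<bar> \<le> \<bar>real_of_int r + real_of_int s * Re y\<bar> + \<bar>real_of_int s * Re y\<bar>"
      using abs_triangle_ineq4[of "real_of_int r + real_of_int s * Re y" "real_of_int s * Re y"] by simp
    then have "\<bar>real_of_int r\<bar> \<le> R + \<bar>real_of_int s\<bar> * \<bar>Re y\<bar>" using rw by (simp add: abs_mult)
    also have "\<dots> \<le> R + real_of_int A * \<bar>Re y\<bar>"
      using sA by (intro add_left_mono mult_right_mono) auto
    finally have "\<bar>r\<bar> \<le> B" unfolding B_def by linarith
    with sA have "(r, s) \<in> {-B..B} \<times> {-A..A}" by auto
    then show "w \<in> (\<lambda>(r,s). of_int r + of_int s * y) ` ({-B..B} \<times> {-A..A})" using w by force
  qed
  then show ?thesis by (rule finite_subset) auto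
qed

lemma inL_lower:
  assumes "Im y \<noteq> 0" "inL y w" "w \<noteq> 0"
  shows "min 1 \<bar>Im y\<bar> \<le> cmod w"
proof -
  obtain r s where w: "w = of_int r + of_int s * y" using assms(2) unfolding inL_def by blast
  show ?thesis
  proof (cases "s = 0")
    case True
    then have "r \<noteq> 0" using w assms(3) by simp
    then have "1 \<le> cmod w" using w True by simp
    then show ?thesis by linarith
  next
    case False
    have "1 \<le> \<bar>s\<bar>" using False by linarith
    then have "(1::real) \<le> \<bar>real_of_int s\<bar>" by (simp only: of_int_abs[symmetric] of_int_1_le_iff)
    then have "1 * \<bar>Im y\<bar> \<le> \<bar>real_of_int s\<bar> * \<bar>Im y\<bar>" by (rule mult_right_mono) simp
    then have "\<bar>Im y\<bar> \<le> \<bar>real_of_int s\<bar> * \<bar>Im y\<bar>" by simp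
    also have "\<dots> = \<bar>Im w\<bar>" using w by (simp add: abs_mult)
    also have "\<dots> \<le> cmod w" by (rule abs_Im_le_cmod)
    finally show ?thesis by linarith
  qed
qed

lemma orbit_Suc: "orbit a0 \<alpha> N (Suc j) = Tmap a0 \<alpha> (orbit a0 \<alpha> N j)"
  unfolding orbit_def by simp

lemma orbit_add: "orbit a0 \<alpha> N (j + t) = (Tmap a0 \<alpha> ^^ t) (orbit a0 \<alpha> N j)"
  unfolding orbit_def by (simp add: funpow_add add.commute[of j t])

lemma orbit_rec: "orbit a0 \<alpha> N j = \<alpha> * orbit a0 \<alpha> N (Suc j) + expdigit a0 \<alpha> N j"
  unfolding expdigit_def by simp

lemma orbit0: "orbit a0 \<alpha> N 0 = N"
  unfolding orbit_def by simp

lemma orbit_expansion: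
  "N = \<alpha>^j * orbit a0 \<alpha> N j + (\<Sum>i<j. expdigit a0 \<alpha> N i * \<alpha>^i)"
proof (induction j)
  case 0 then show ?case by (simp add: orbit0)
next
  case (Suc j)
  have "\<alpha>^j * orbit a0 \<alpha> N j = \<alpha>^Suc j * orbit a0 \<alpha> N (Suc j) + expdigit a0 \<alpha> N j * \<alpha>^j"
    by (subst orbit_rec) (simp add: algebra_simps)
  then show ?case using Suc by (simp add: add_ac)
qed



theorem mainTheorem8:
  fixes \<alpha> :: complex and a0 a1 a2 :: int
  assumes "Re \<alpha> \<in> \<rat>" and "Im \<alpha> \<in> \<rat>" and "Im \<alpha> \<noteq> 0"
    and "cmod \<alpha> > 1"
    and "a2 > 0" and "gcd a0 (gcd a1 a2) = 1"
    and "of_int a2 * \<alpha>^2 + of_int a1 * \<alpha> + of_int a0 = 0"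
  shows "\<exists>C::real. \<forall>(N::complex) (k::nat).
           N \<in> Lambda \<alpha> \<and> N \<noteq> 0
           \<and> orbit a0 \<alpha> N (Suc k) = 0 \<and> (\<forall>j<k. orbit a0 \<alpha> N (Suc j) \<noteq> 0)
           \<and> N = (\<Sum>j\<le>k. expdigit a0 \<alpha> N j * \<alpha> ^ j)
           \<and> (\<forall>j\<le>k. expdigit a0 \<alpha> N j \<in> of_int ` digits a0)
           \<and> expdigit a0 \<alpha> N k \<noteq> 0
           \<longrightarrow> \<bar>real k - log (cmod \<alpha>) (cmod N)\<bar> \<le> C"
proof -
  define r where "r = cmod \<alpha>"
  have r1: "r > 1" using assms(4) r_def by simp
  have ane: "\<alpha> \<noteq> 0" using r1 r_def by auto
  have a2ne: "a2 \<noteq> 0" using assms(5) by simp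
  define y where "y = of_int a2 * \<alpha>"
  have Imy: "Im y \<noteq> 0" using assms(3,5) y_def by simp
  define B where "B = real_of_int \<bar>a0\<bar>"
  define E where "E = B / (r - 1)"
  define S where "S = {w. inL y w \<and> cmod w \<le> 1 + E}"
  define K0 where "K0 = card S"
  define c0 where "c0 = min 1 \<bar>Im y\<bar>"
  define C3 where "C3 = r ^ K0 / c0"
  define C4 where "C4 = (B + 1) * r / (r - 1)"
  have finS: "finite S" unfolding S_def using inL_finite[OF Imy] .
  have c0pos: "c0 > 0" "c0 \<le> 1" using Imy c0_def by auto
  have C3pos: "C3 > 0" using r1 c0pos C3_def by simp
  have B0: "B \<ge> 0" by (simp add: B_def)
  have C4pos: "C4 > 0" using r1 B0 C4_def by simp
  have E0: "E \<ge> 0" using B0 r1 by (simp add: E_def)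
  show ?thesis
  proof (rule exI[of _ "\<bar>log r C3\<bar> + \<bar>log r C4\<bar>"], intro allI impI)
    fix N k
    assume H: "N \<in> Lambda \<alpha> \<and> N \<noteq> 0
           \<and> orbit a0 \<alpha> N (Suc k) = 0 \<and> (\<forall>j<k. orbit a0 \<alpha> N (Suc j) \<noteq> 0)
           \<and> N = (\<Sum>j\<le>k. expdigit a0 \<alpha> N j * \<alpha> ^ j)
           \<and> (\<forall>j\<le>k. expdigit a0 \<alpha> N j \<in> of_int ` digits a0)
           \<and> expdigit a0 \<alpha> N k \<noteq> 0"
    define Ob where "Ob = orbit a0 \<alpha> N"
    define e where "e = expdigit a0 \<alpha> N"
    have NL: "N \<in> Lambda \<alpha>" and N0: "N \<noteq> 0" and Ok: "Ob (Suc k) = 0"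
      and Onz: "\<forall>j<k. Ob (Suc j) \<noteq> 0"
      and dig: "\<forall>j\<le>k. e j \<in> of_int ` digits a0"
      using H unfolding Ob_def e_def by blast+
    have Nexp: "N = (\<Sum>j\<le>k. e j * \<alpha> ^ j)" using H unfolding e_def by blast
    have eint: "\<exists>t. e j = of_int t" if "j \<le> k" for j using dig that by blast
    have ebound: "cmod (e j) \<le> B" if "j \<le> k" for j
    proof -
      from dig that obtain t where "t \<in> digits a0" "e j = of_int t" by blast
      then show ?thesis unfolding B_def digits_def by auto
    qed
    have rec: "Ob j = \<alpha> * Ob (Suc j) + e j" for j
      unfolding Ob_def e_def by (rule orbit_rec)
    have PSa: "Ob (Suc k - t) \<in> PS \<alpha>" if "t \<le> Suc k" for t
      using that
    proof (induction t)
      case 0 then show ?case using Ok PS_zero by simp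
    next
      case (Suc t)
      define j where "j = Suc k - Suc t"
      have jk: "j \<le> k" "Suc j = Suc k - t" using Suc.prems j_def by auto
      obtain d where d: "e j = of_int d" using eint[OF jk(1)] by blast
      have "Ob j = \<alpha> * Ob (Suc j) + of_int d" using rec[of j] d by simp
      moreover have "Ob (Suc j) \<in> PS \<alpha>" using Suc jk by simp
      ultimately show ?case using PS_step1 j_def by metis
    qed
    have PSa': "Ob j \<in> PS \<alpha>" if "j \<le> Suc k" for j using PSa[of "Suc k - j"] that by simp
    have PSb: "Ob j \<in> PS (inverse \<alpha>)" if "j \<le> Suc k" for j
      using that
    proof (induction j)
      case 0
      have "N \<in> invZpoly \<alpha>" using NL Lambda_def by simp
      then show ?case using invZpoly_PS orbit0 Ob_def by auto
    next
      case (Suc j)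
      then have jk: "j \<le> k" by simp
      obtain d where d: "e j = of_int d" using eint[OF jk] by blast
      have "Ob (Suc j) = inverse \<alpha> * (Ob j - of_int d)"
        using rec[of j] d ane by (simp add: field_simps)
      then show ?case using PS_step2 Suc by simp
    qed
    have Lj: "inL y (Ob j)" if jj: "j \<le> Suc k" for j
    proof -
      obtain n c where x1: "Ob j = (\<Sum>i<n. of_int (c i) * \<alpha>^i)" using PSa'[OF jj] unfolding PS_def by blast
      obtain m e' where x2: "Ob j = (\<Sum>i<m. of_int (e' i) * (inverse \<alpha>)^i)" using PSb[OF jj] unfolding PS_def by blast
      show ?thesis unfolding y_def by (rule integral[OF assms(7) ane assms(6) a2ne x1 x2])
    qed
    have Nlow: "c0 \<le> cmod N" using inL_lower[OF Imy Lj[of 0]] N0 orbit0 c0_def Ob_def by simp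
    have Npos: "cmod N > 0" using N0 by simp
    have up: "cmod N \<le> C4 * r^k"
    proof -
      have "cmod N = cmod (\<Sum>j\<le>k. e j * \<alpha> ^ j)" by (rule arg_cong[where f=cmod, OF Nexp])
      also have "\<dots> \<le> (\<Sum>j\<le>k. cmod (e j * \<alpha> ^ j))" by (rule norm_sum)
      also have "\<dots> \<le> (\<Sum>j\<le>k. B * r^j)"
      proof (rule sum_mono)
        fix j assume "j \<in> {..k}"
        then have "cmod (e j) \<le> B" using ebound by simp
        then show "cmod (e j * \<alpha> ^ j) \<le> B * r^j"
          unfolding norm_mult norm_power r_def[symmetric] using r1 by (intro mult_right_mono) auto
      qed
      also have "\<dots> = B * (\<Sum>j<Suc k. r^j)" by (simp add: sum_distrib_left lessThan_Suc_atMost)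
      also have "\<dots> = B * ((r^Suc k - 1) / (r - 1))" using geometric_sum[of r "Suc k"] r1 by simp
      also have "\<dots> \<le> (B + 1) * (r^Suc k / (r - 1))"
      proof -
        have "1 \<le> r^Suc k" using r1 by (intro one_le_power) simp
        then show ?thesis using r1 B0 by (intro mult_mono divide_right_mono) auto
      qed
      also have "\<dots> = C4 * r^k" unfolding C4_def by (simp add: field_simps)
      finally show ?thesis .
    qed
    have gb: "r^j * cmod (Ob j) \<le> cmod N + E * r^j" if "j \<le> Suc k" for j
    proof -
      have "\<alpha>^j * Ob j + (\<Sum>i<j. e i * \<alpha>^i) = N"
        unfolding Ob_def e_def by (rule sym, rule orbit_expansion)
      then have eq: "\<alpha>^j * Ob j = N - (\<Sum>i<j. e i * \<alpha>^i)" by (rule eq_diff_eq[THEN iffD2])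
      have "r^j * cmod (Ob j) = cmod (\<alpha>^j * Ob j)" unfolding norm_mult norm_power r_def ..
      also have "\<dots> \<le> cmod N + cmod (\<Sum>i<j. e i * \<alpha>^i)" unfolding eq by (rule norm_triangle_ineq4)
      also have "cmod (\<Sum>i<j. e i * \<alpha>^i) \<le> (\<Sum>i<j. B * r^i)"
      proof -
        have "cmod (\<Sum>i<j. e i * \<alpha>^i) \<le> (\<Sum>i<j. cmod (e i * \<alpha>^i))" by (rule norm_sum)
        also have "\<dots> \<le> (\<Sum>i<j. B * r^i)"
        proof (rule sum_mono)
          fix i assume "i \<in> {..<j}"
          then have "cmod (e i) \<le> B" using ebound that by simp
          then show "cmod (e i * \<alpha> ^ i) \<le> B * r^i"
            unfolding norm_mult norm_power r_def[symmetric] using r1 by (intro mult_right_mono) auto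
        qed
        finally show ?thesis .
      qed
      also have "(\<Sum>i<j. B * r^i) = B * ((r^j - 1) / (r - 1))"
        unfolding sum_distrib_left[symmetric] using geometric_sum[of r j] r1 by simp
      also have "\<dots> \<le> B * (r^j / (r - 1))" using r1 B0 by (intro mult_left_mono divide_right_mono) auto
      also have "\<dots> = E * r^j" unfolding E_def by simp
      finally show ?thesis by simp
    qed
    have key: False if "Ob i = Ob j" "i < j" "j \<le> k" for i j
    proof -
      define t where "t = Suc k - j"
      have "Ob (i + t) = Ob (j + t)" unfolding Ob_def orbit_add using that(1) unfolding Ob_def by simp
      moreover have "j + t = Suc k" using that t_def by simp
      moreover have "i + t = Suc (i + k - j)" using that t_def by simp
      moreover have "i + k - j < k" using that by simp
      ultimately show False using Ok Onz by auto
    qed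
    have inj: "inj_on Ob {..k}"
    proof (rule inj_onI)
      fix i j assume i: "i \<in> {..k}" and j: "j \<in> {..k}" and eq: "Ob i = Ob j"
      show "i = j"
      proof (rule ccontr)
        assume "i \<noteq> j"
        then have "i < j \<or> j < i" by linarith
        then show False using key[of i j] key[of j i] eq i j by auto
      qed
    qed
    have rk: "r^k \<le> C3 * cmod N"
    proof (cases "K0 \<le> k")
      case True
      define j0 where "j0 = k - K0"
      have lt: "r^j0 < cmod N"
      proof (rule ccontr)
        assume "\<not> r^j0 < cmod N"
        hence Nle: "cmod N \<le> r^j0" by simp
        have "Ob ` {j0..k} \<subseteq> S"
        proof
          fix w assume "w \<in> Ob ` {j0..k}"
          then obtain j where j: "j0 \<le> j" "j \<le> k" "w = Ob j" by auto
          have "r^j * cmod (Ob j) \<le> cmod N + E * r^j" using gb j by simp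
          also have "\<dots> \<le> r^j + E * r^j"
          proof -
            have "r^j0 \<le> r^j" using j r1 by (intro power_increasing) auto
            then show ?thesis using Nle by simp
          qed
          finally have "r^j * cmod (Ob j) \<le> r^j * (1 + E)" by (simp add: algebra_simps)
          then have "cmod (Ob j) \<le> 1 + E" using r1 by simp
          then show "w \<in> S" using Lj[of j] j S_def by simp
        qed
        moreover have "inj_on Ob {j0..k}" using inj by (rule inj_on_subset) auto
        ultimately have "card {j0..k} \<le> card S" using finS by (intro card_inj_on_le) auto
        moreover have "card {j0..k} = K0 + 1" using True j0_def by simp
        ultimately show False using K0_def by simp
      qed
      have "r^k = r^j0 * r^K0" using True j0_def by (simp add: power_add[symmetric])
      also have "\<dots> \<le> cmod N * r^K0" using lt r1 by simp
      also have "\<dots> \<le> C3 * cmod N"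
      proof -
        have "r^K0 \<le> r^K0 / c0" using c0pos r1 by (simp add: le_divide_eq)
        then have "cmod N * r^K0 \<le> cmod N * (r^K0 / c0)" using Npos by (intro mult_left_mono) auto
        then show ?thesis unfolding C3_def by (simp only: mult.commute)
      qed
      finally show ?thesis .
    next
      case False
      have "r^k \<le> r^K0" using False r1 by (simp add: power_increasing)
      also have "\<dots> = (r^K0 / c0) * c0" using c0pos by simp
      also have "\<dots> \<le> C3 * cmod N" unfolding C3_def using Nlow c0pos r1 by (intro mult_left_mono) auto
      finally show ?thesis .
    qed
    have l1: "real k \<le> log r C3 + log r (cmod N)"
    proof -
      have "real k = log r (r^k)" using r1 by simp
      also have "\<dots> \<le> log r (C3 * cmod N)"
        by (rule log_le_cancel_iff[THEN iffD2]) (use rk r1 C3pos Npos in auto)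
      also have "\<dots> = log r C3 + log r (cmod N)" using C3pos Npos by (simp add: log_mult)
      finally show ?thesis .
    qed
    have l2: "log r (cmod N) \<le> log r C4 + real k"
    proof -
      have "log r (cmod N) \<le> log r (C4 * r^k)"
        by (rule log_le_cancel_iff[THEN iffD2]) (use up r1 C4pos Npos in auto)
      also have "\<dots> = log r C4 + real k" using C4pos r1 by (simp add: log_mult)
      finally show ?thesis .
    qed
    show "\<bar>real k - log (cmod \<alpha>) (cmod N)\<bar> \<le> \<bar>log r C3\<bar> + \<bar>log r C4\<bar>"
      unfolding r_def[symmetric] using l1 l2 by linarith
  qed
qed

end
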